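(* Let $p$ and $q$ be positive integers, let $m_1<m_2<\cdots<m_q$ be positive integers and let $v_1,\dots,v_q$ be positive integers. Let $A_n$ be the number of ways to tile an $n$-board using $v_i$ colours of $(1/p,1-1/p;m_i)$-combs for $i=1,\ldots,q$. Define $s_n$ by $s_n=v_1s_{n-m_1}+\cdots+v_qs_{n-m_q}+\delta_{n,0}$ for $n\ge0$ and $s_n=0$ for $n<0$. Then for all $n\ge 0$, $A_n=s_n^p$.
   Context: An $n$-board is the strip $[0,n]\times[0,1]$ divided into $n$ unit square cells. A $(w,g;m)$-comb is a tile consisting of a row of $m$ rectangles (teeth) of size $w\times 1$, consecutive teeth separated by a gap of width $g$; the gaps are not part of the tile and may be occupied by other tiles. A tiling of a board is a placement of translated (unrotated) copies of tiles so that the teeth cover the board exactly with no overlaps; tiles of the same shape but different colours are distinguished. $\delta_{i,j}$ equals $1$ if $i=j$ and $0$ otherwise. *)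

theory Defs
  imports Main
begin

text \<open>Discrete model: the n-board is cut into n*p subcells of width 1/p, numbered
 0..n*p-1 (subcell x is [x/p,(x+1)/p]). A (1/p,1-1/p;m)-comb whose leftmost tooth
 occupies subcell j covers the subcells j, j+p, ..., j+(m-1)p.
 A placed tile is a triple (j, i, c): start subcell j, comb type i < q (0-based),
 colour c < v i.\<close>

definition comb_cells :: "nat \<Rightarrow> nat \<Rightarrow> nat \<Rightarrow> nat set" where
  "comb_cells p m j = {j + k * p | k. k < m}"

definition comb_tilings ::
  "nat \<Rightarrow> nat \<Rightarrow> (nat \<Rightarrow> nat) \<Rightarrow> (nat \<Rightarrow> nat) \<Rightarrow> nat \<Rightarrow> (nat \<times> nat \<times> nat) set set" where
  "comb_tilings p q m v n =
     {T. (\<forall>(j, i, c) \<in> T. i < q \<and> c < v i \<and> comb_cells p (m i) j \<subseteq> {0..<n * p})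
       \<and> (\<forall>x < n * p. \<exists>!t \<in> T. (case t of (j, i, c) \<Rightarrow> x \<in> comb_cells p (m i) j))}"

end

theory Submission
  imports Defs "HOL-Library.FuncSet"
begin


definition cov1 :: "(nat\<Rightarrow>nat) \<Rightarrow> nat \<Rightarrow> nat\<times>nat\<times>nat \<Rightarrow> bool" where
  "cov1 m y t = (fst t \<le> y \<and> y < fst t + m (fst (snd t)))"

definition T1 :: "nat \<Rightarrow> (nat\<Rightarrow>nat) \<Rightarrow> (nat\<Rightarrow>nat) \<Rightarrow> nat \<Rightarrow> nat \<Rightarrow> (nat\<times>nat\<times>nat) set set" where
  "T1 q m v lo n = {T. (\<forall>t\<in>T. fst (snd t) < q \<and> snd (snd t) < v (fst (snd t)) \<and> lo \<le> fst t \<and> fst t + m (fst (snd t)) \<le> n)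
     \<and> (\<forall>y. lo \<le> y \<and> y < n \<longrightarrow> (\<exists>!t\<in>T. cov1 m y t))}"

lemma T1_base:
  assumes mpos: "\<forall>i<q. m i > 0"
  shows "T1 q m v n n = {{}}"
proof -
  have "T = {}" if "T \<in> T1 q m v n n" for T
    using that mpos unfolding T1_def by fastforce
  then show ?thesis unfolding T1_def by auto
qed

lemma T1_finite:
  assumes mpos: "\<forall>i<q. m i > 0"
  shows "finite (T1 q m v lo n)"
proof -
  have "T1 q m v lo n \<subseteq> Pow (SIGMA a:{..<n}. SIGMA i:{..<q}. {..<v i})"
  proof
    fix T assume "T \<in> T1 q m v lo n"
    then have "\<forall>t\<in>T. fst (snd t) < q \<and> snd (snd t) < v (fst (snd t)) \<and> fst t + m (fst (snd t)) \<le> n"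
      unfolding T1_def by auto
    then show "T \<in> Pow (SIGMA a:{..<n}. SIGMA i:{..<q}. {..<v i})"
      using mpos by fastforce
  qed
  moreover have "finite (Pow (SIGMA a:{..<n}. SIGMA i:{..<q}. {..<v i}))" by auto
  ultimately show ?thesis by (rule finite_subset)
qed

lemma ex1_uniq: "\<exists>!x\<in>T. P x \<Longrightarrow> x \<in> T \<Longrightarrow> P x \<Longrightarrow> y \<in> T \<Longrightarrow> P y \<Longrightarrow> x \<noteq> y \<Longrightarrow> False"
  by blast

lemma ex1_insert1: "P x \<Longrightarrow> (\<And>t. t \<in> T \<Longrightarrow> \<not> P t) \<Longrightarrow> \<exists>!t\<in>insert x T. P t"
  by blast

lemma ex1_insert2: "\<not> P x \<Longrightarrow> \<exists>!t\<in>T. P t \<Longrightarrow> \<exists>!t\<in>insert x T. P t"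
  by blast

lemma ex1_diff: "\<not> P x \<Longrightarrow> \<exists>!t\<in>T. P t \<Longrightarrow> \<exists>!t\<in>T - {x}. P t"
  by blast

lemma T1_step:
  assumes mpos: "\<forall>i<q. m i > 0" and lon: "lo < n"
  shows "T1 q m v lo n = (\<lambda>(ic,T'). insert (lo, fst ic, snd ic) T') `
     (SIGMA ic:{(i,c). i<q \<and> c<v i \<and> lo + m i \<le> n}. T1 q m v (lo + m (fst ic)) n)"
  (is "?L = ?f ` ?S")
proof
  show "?f ` ?S \<subseteq> ?L"
  proof
    fix T assume "T \<in> ?f ` ?S"
    then obtain i c T' where ic: "i<q" "c < v i" "lo + m i \<le> n" and T': "T' \<in> T1 q m v (lo + m i) n"
      and T: "T = insert (lo,i,c) T'" by auto
    have A: "\<forall>t\<in>T'. fst (snd t) < q \<and> snd (snd t) < v (fst (snd t)) \<and> lo + m i \<le> fst t \<and> fst t + m (fst (snd t)) \<le> n"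
      using T' unfolding T1_def by auto
    have B: "\<forall>y. lo + m i \<le> y \<and> y < n \<longrightarrow> (\<exists>!t\<in>T'. cov1 m y t)"
      using T' unfolding T1_def by auto
    have C: "\<exists>!t\<in>T. cov1 m y t" if "lo \<le> y" "y < n" for y
    proof (cases "y < lo + m i")
      case True
      then have c0: "cov1 m y (lo,i,c)" using that unfolding cov1_def by auto
      have nc: "\<not> cov1 m y t" if "t \<in> T'" for t
      proof -
        have "lo + m i \<le> fst t" using A that by blast
        then show ?thesis using True unfolding cov1_def by simp
      qed
      show ?thesis unfolding T using ex1_insert1[of "cov1 m y" "(lo,i,c)" T'] c0 nc by blast
    next
      case False
      then have "\<not> cov1 m y (lo,i,c)" unfolding cov1_def by auto
      moreover have "\<exists>!t\<in>T'. cov1 m y t" using B False that by auto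
      ultimately show ?thesis unfolding T by (rule ex1_insert2)
    qed
    have D: "\<forall>t\<in>T. fst (snd t) < q \<and> snd (snd t) < v (fst (snd t)) \<and> lo \<le> fst t \<and> fst t + m (fst (snd t)) \<le> n"
    proof
      fix t assume "t \<in> T"
      then have "t = (lo,i,c) \<or> t \<in> T'" unfolding T by blast
      then show "fst (snd t) < q \<and> snd (snd t) < v (fst (snd t)) \<and> lo \<le> fst t \<and> fst t + m (fst (snd t)) \<le> n"
      proof
        assume "t \<in> T'" then show ?thesis using A by fastforce
      qed (use ic in auto)
    qed
    show "T \<in> ?L" unfolding T1_def mem_Collect_eq using C D by blast
  qed
next
  show "?L \<subseteq> ?f ` ?S"
  proof
    fix T assume TL: "T \<in> ?L"
    have A: "\<forall>t\<in>T. fst (snd t) < q \<and> snd (snd t) < v (fst (snd t)) \<and> lo \<le> fst t \<and> fst t + m (fst (snd t)) \<le> n"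
      using TL unfolding T1_def by auto
    have B: "\<forall>y. lo \<le> y \<and> y < n \<longrightarrow> (\<exists>!t\<in>T. cov1 m y t)"
      using TL unfolding T1_def by auto
    obtain t0 where t0: "t0 \<in> T" "cov1 m lo t0" using B lon by blast
    obtain a i c where t0a: "t0 = (a,i,c)" by (cases t0)
    have "a = lo" using t0 A unfolding t0a cov1_def by fastforce
    then have t0e: "t0 = (lo,i,c)" using t0a by simp
    have ic: "i<q" "c < v i" "lo + m i \<le> n" using A t0 t0e by auto
    define T' where "T' = T - {t0}"
    have A': "lo + m i \<le> fst t" if "t \<in> T'" for t
    proof (rule ccontr)
      assume "\<not> ?thesis"
      have tT: "t \<in> T" "t \<noteq> t0" using that unfolding T'_def by auto
      have "fst (snd t) < q \<and> lo \<le> fst t \<and> fst t + m (fst (snd t)) \<le> n" using A tT(1) by blast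
      then have At: "fst (snd t) < q" "lo \<le> fst t" "fst t + m (fst (snd t)) \<le> n" by auto
      have mt: "m (fst (snd t)) > 0" using mpos At by auto
      have c1: "cov1 m (fst t) t" using mt unfolding cov1_def by simp
      have c2: "cov1 m (fst t) t0" using \<open>\<not> lo + m i \<le> fst t\<close> At unfolding t0e cov1_def by simp
      have "fst t < n" using At mt by linarith
      then have "\<exists>!u\<in>T. cov1 m (fst t) u" using B[rule_format, OF conjI[OF At(2)]] by blast
      then show False using ex1_uniq[OF _ tT(1) c1 t0(1) c2 tT(2)] by blast
    qed
    have "T' \<in> T1 q m v (lo + m i) n"
    proof -
      have E: "\<exists>!t\<in>T'. cov1 m y t" if "lo + m i \<le> y" "y < n" for y
      proof -
        have "\<not> cov1 m y t0" using that unfolding t0e cov1_def by auto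
        moreover have "\<exists>!t\<in>T. cov1 m y t" using B that by auto
        ultimately show ?thesis unfolding T'_def by (rule ex1_diff)
      qed
      have F: "\<forall>t\<in>T'. fst (snd t) < q \<and> snd (snd t) < v (fst (snd t)) \<and> lo + m i \<le> fst t \<and> fst t + m (fst (snd t)) \<le> n"
        using A A' unfolding T'_def by blast
      show ?thesis unfolding T1_def mem_Collect_eq using E F by blast
    qed
    moreover have "T = insert (lo,i,c) T'" using t0 t0e unfolding T'_def by auto
    moreover have "((i,c),T') \<in> ?S" using ic calculation(1) by simp
    ultimately show "T \<in> ?f ` ?S" by (metis (no_types, lifting) case_prod_conv fst_conv snd_conv image_eqI)
  qed
qed

lemma T1_inj:
  assumes mpos: "\<forall>i<q. m i > 0"
  shows "inj_on (\<lambda>(ic,T'). insert (lo, fst ic, snd ic) T')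
     (SIGMA ic:{(i,c). i<q \<and> c<v i \<and> lo + m i \<le> n}. T1 q m v (lo + m (fst ic)) n)"
proof (rule inj_onI)
  fix x y assume x: "x \<in> (SIGMA ic:{(i,c). i<q \<and> c<v i \<and> lo + m i \<le> n}. T1 q m v (lo + m (fst ic)) n)"
    and y: "y \<in> (SIGMA ic:{(i,c). i<q \<and> c<v i \<and> lo + m i \<le> n}. T1 q m v (lo + m (fst ic)) n)"
    and e: "(\<lambda>(ic,T'). insert (lo, fst ic, snd ic) T') x = (\<lambda>(ic,T'). insert (lo, fst ic, snd ic) T') y"
  obtain i c T where xe: "x = ((i,c),T)" by (metis prod.collapse)
  obtain i' c' T' where ye: "y = ((i',c'),T')" by (metis prod.collapse)
  have "\<forall>t\<in>T. lo + m i \<le> fst t" using x unfolding xe T1_def by auto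
  then have nT: "(lo,i',c') \<notin> T" "(lo,i,c) \<notin> T" using x mpos unfolding xe by fastforce+
  have "\<forall>t\<in>T'. lo + m i' \<le> fst t" using y unfolding ye T1_def by auto
  then have nT': "(lo,i,c) \<notin> T'" "(lo,i',c') \<notin> T'" using y mpos unfolding ye by fastforce+
  have E: "insert (lo,i,c) T = insert (lo,i',c') T'" using e unfolding xe ye by simp
  then have "(lo,i',c') = (lo,i,c)" using nT by blast
  then have "i = i'" "c = c'" by auto
  moreover have "T = T'"
  proof -
    have "T = insert (lo,i,c) T - {(lo,i,c)}" using nT(2) by simp
    also have "\<dots> = insert (lo,i',c') T' - {(lo,i',c')}" using E \<open>i = i'\<close> \<open>c = c'\<close> by simp
    also have "\<dots> = T'" using nT'(2) by simp
    finally show ?thesis .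
  qed
  ultimately show "x = y" unfolding xe ye by simp
qed

lemma T1_card:
  assumes mpos: "\<forall>i<q. m i > 0" and s0: "\<forall>n < 0. s n = 0"
    and srec: "\<forall>n \<ge> 0. s n = (\<Sum>i<q. v i * s (n - int (m i))) + (if n = 0 then 1 else 0)"
  shows "lo \<le> n \<Longrightarrow> card (T1 q m v lo n) = s (int n - int lo)"
proof (induction "n - lo" arbitrary: lo rule: less_induct)
  case less
  show ?case
  proof (cases "lo = n")
    case True
    have "\<forall>i<q. s (- int (m i)) = 0" using s0 mpos by auto
    then have "s 0 = 1" using srec by simp
    then show ?thesis using True T1_base[OF mpos] by simp
  next
    case False
    then have lon: "lo < n" using less by simp
    define J where "J = {i. i<q \<and> lo + m i \<le> n}"
    have IE: "{(i,c). i<q \<and> c<v i \<and> lo + m i \<le> n} = Sigma J (\<lambda>i. {..<v i})"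
      unfolding J_def by auto
    have fJ: "finite J" unfolding J_def by auto
    have "card (T1 q m v lo n) = card (SIGMA ic:{(i,c). i<q \<and> c<v i \<and> lo + m i \<le> n}. T1 q m v (lo + m (fst ic)) n)"
      unfolding T1_step[OF mpos lon] by (rule card_image[OF T1_inj[OF mpos]])
    also have "\<dots> = (\<Sum>ic\<in>Sigma J (\<lambda>i. {..<v i}). card (T1 q m v (lo + m (fst ic)) n))"
      unfolding IE by (rule card_SigmaI) (use fJ T1_finite[OF mpos] in auto)
    also have "\<dots> = (\<Sum>ic\<in>Sigma J (\<lambda>i. {..<v i}). s (int n - int lo - int (m (fst ic))))"
    proof (rule sum.cong[OF refl])
      fix ic assume "ic \<in> Sigma J (\<lambda>i. {..<v i})"
      then have "fst ic < q" "lo + m (fst ic) \<le> n" unfolding J_def by auto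
      then have "card (T1 q m v (lo + m (fst ic)) n) = s (int n - int (lo + m (fst ic)))"
        using less mpos by (intro less(1)) auto
      then show "card (T1 q m v (lo + m (fst ic)) n) = s (int n - int lo - int (m (fst ic)))"
        by (simp add: algebra_simps)
    qed
    also have "\<dots> = (\<Sum>i\<in>J. \<Sum>c<v i. s (int n - int lo - int (m i)))"
      by (subst sum.Sigma) (use fJ in \<open>auto simp: split_beta\<close>)
    also have "\<dots> = (\<Sum>i\<in>J. v i * s (int n - int lo - int (m i)))" by simp
    also have "\<dots> = (\<Sum>i<q. v i * s (int n - int lo - int (m i)))"
    proof (rule sum.mono_neutral_left)
      show "J \<subseteq> {..<q}" unfolding J_def by auto
      show "\<forall>i\<in>{..<q} - J. v i * s (int n - int lo - int (m i)) = 0"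
      proof
        fix i assume "i \<in> {..<q} - J"
        then have "int n - int lo - int (m i) < 0" unfolding J_def by auto
        then show "v i * s (int n - int lo - int (m i)) = 0" using s0 by simp
      qed
    qed auto
    also have "\<dots> = s (int n - int lo)" using srec lon by simp
    finally show ?thesis .
  qed
qed



lemma comb_mem:
  assumes "p > 0"
  shows "x \<in> comb_cells p mm j \<longleftrightarrow> x mod p = j mod p \<and> j div p \<le> x div p \<and> x div p < j div p + mm"
proof
  assume "x \<in> comb_cells p mm j"
  then obtain k where k: "k < mm" "x = j + k * p" unfolding comb_cells_def by auto
  then show "x mod p = j mod p \<and> j div p \<le> x div p \<and> x div p < j div p + mm"
    using assms by simp
next
  assume h: "x mod p = j mod p \<and> j div p \<le> x div p \<and> x div p < j div p + mm"
  define k where "k = x div p - j div p"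
  have "x = (x div p) * p + x mod p" by simp
  also have "\<dots> = (j div p + k) * p + j mod p" using h unfolding k_def by simp
  also have "\<dots> = j + k * p" by (simp add: algebra_simps)
  finally have "x = j + k * p" .
  moreover have "k < mm" using h unfolding k_def by auto
  ultimately show "x \<in> comb_cells p mm j" unfolding comb_cells_def by auto
qed

lemma comb_sub:
  assumes "p > 0" "mm > 0"
  shows "comb_cells p mm j \<subseteq> {0..<n*p} \<longleftrightarrow> j div p + mm \<le> n"
proof
  assume h: "comb_cells p mm j \<subseteq> {0..<n*p}"
  have "j + (mm - 1) * p \<in> comb_cells p mm j" unfolding comb_cells_def using assms by auto
  then have "j + (mm - 1) * p < n * p" using h by auto
  then have "(j + (mm - 1) * p) div p < n" using less_mult_imp_div_less by blast
  moreover have "(j + (mm - 1) * p) div p = j div p + (mm - 1)" using assms by simp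
  ultimately show "j div p + mm \<le> n" using assms by simp
next
  assume h: "j div p + mm \<le> n"
  show "comb_cells p mm j \<subseteq> {0..<n*p}"
  proof
    fix x assume "x \<in> comb_cells p mm j"
    then have "x div p < n" using h comb_mem[OF assms(1)] by fastforce
    then show "x \<in> {0..<n*p}" using assms by (simp add: div_less_iff_less_mult)
  qed
qed

definition ccov :: "nat \<Rightarrow> (nat\<Rightarrow>nat) \<Rightarrow> nat \<Rightarrow> nat\<times>nat\<times>nat \<Rightarrow> bool" where
  "ccov p m x t = (x mod p = fst t mod p \<and> cov1 m (x div p) (fst t div p, snd t))"

lemma comb_alt:
  assumes p: "p > 0" and mpos: "\<forall>i<q. m i > 0"
  shows "comb_tilings p q m v n = {T. (\<forall>t\<in>T. fst (snd t) < q \<and> snd (snd t) < v (fst (snd t)) \<and> fst t div p + m (fst (snd t)) \<le> n)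
      \<and> (\<forall>x<n*p. \<exists>!t\<in>T. ccov p m x t)}"
proof -
  have e1: "(case t of (j, i, c) \<Rightarrow> x \<in> comb_cells p (m i) j) = ccov p m x t" for x t
    unfolding ccov_def cov1_def using comb_mem[OF p] by (auto simp: split_beta)
  have e2: "(case t of (j, i, c) \<Rightarrow> i < q \<and> c < v i \<and> comb_cells p (m i) j \<subseteq> {0..<n * p}) =
      (fst (snd t) < q \<and> snd (snd t) < v (fst (snd t)) \<and> fst t div p + m (fst (snd t)) \<le> n)" for t
    using comb_sub[OF p] mpos by (auto simp: split_beta)
  show ?thesis unfolding comb_tilings_def e1 e2 Ball_def by simp
qed

definition FF :: "nat \<Rightarrow> (nat\<times>nat\<times>nat) set \<Rightarrow> nat \<Rightarrow> (nat\<times>nat\<times>nat) set" where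
  "FF p T = (\<lambda>r\<in>{..<p}. (\<lambda>t. (fst t div p, snd t)) ` {t\<in>T. fst t mod p = r})"

definition GG :: "nat \<Rightarrow> (nat \<Rightarrow> (nat\<times>nat\<times>nat) set) \<Rightarrow> (nat\<times>nat\<times>nat) set" where
  "GG p f = (\<Union>r<p. (\<lambda>t. (fst t * p + r, snd t)) ` f r)"

lemma GF: assumes p: "p > 0" shows "GG p (FF p T) = T"
proof
  show "GG p (FF p T) \<subseteq> T"
    unfolding GG_def FF_def by (auto simp: mult.commute)
  show "T \<subseteq> GG p (FF p T)"
  proof
    fix t assume t: "t \<in> T"
    have r: "fst t mod p < p" using p by simp
    have "(fst t div p, snd t) \<in> FF p T (fst t mod p)" unfolding FF_def using t r by auto
    then have "(\<lambda>u. (fst u * p + fst t mod p, snd u)) (fst t div p, snd t) \<in> (\<lambda>u. (fst u * p + fst t mod p, snd u)) ` FF p T (fst t mod p)"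
      by (rule imageI)
    moreover have "(\<lambda>u. (fst u * p + fst t mod p, snd u)) (fst t div p, snd t) = t" by simp
    ultimately have "t \<in> (\<lambda>u. (fst u * p + fst t mod p, snd u)) ` FF p T (fst t mod p)" by simp
    then show "t \<in> GG p (FF p T)" unfolding GG_def using r by blast
  qed
qed

lemma FG: assumes p: "p > 0" and f: "f \<in> PiE {..<p} X" shows "FF p (GG p f) = f"
proof
  fix r
  show "FF p (GG p f) r = f r"
  proof (cases "r < p")
    case False then show ?thesis using f unfolding FF_def by (simp add: PiE_def extensional_def)
  next
    case True
    have "{t \<in> GG p f. fst t mod p = r} = (\<lambda>t. (fst t * p + r, snd t)) ` f r"
      unfolding GG_def using True by (auto simp: image_iff) force
    moreover have "(\<lambda>t. (fst t div p, snd t)) ` (\<lambda>t. (fst t * p + r, snd t)) ` f r = f r"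
      using True by (force simp: image_image)
    ultimately show ?thesis unfolding FF_def using True by simp
  qed
qed



lemma T1_I: "(\<forall>t\<in>T. fst (snd t) < q \<and> snd (snd t) < v (fst (snd t)) \<and> lo \<le> fst t \<and> fst t + m (fst (snd t)) \<le> n)
  \<Longrightarrow> (\<And>y. lo \<le> y \<Longrightarrow> y < n \<Longrightarrow> \<exists>!t\<in>T. cov1 m y t) \<Longrightarrow> T \<in> T1 q m v lo n"
  unfolding T1_def by simp

lemma ex1_get: "\<exists>!t\<in>T. P t \<Longrightarrow> (\<And>t0. t0 \<in> T \<Longrightarrow> P t0 \<Longrightarrow> (\<And>t. t \<in> T \<Longrightarrow> P t \<Longrightarrow> t = t0) \<Longrightarrow> R) \<Longrightarrow> R"
  by blast

lemma ex1_image: "\<exists>!t\<in>S. P (g t) \<Longrightarrow> \<exists>!u\<in>g ` S. P u"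
  by blast

lemma F_mem:
  assumes p: "p > 0" and mpos: "\<forall>i<q. m i > 0" and T: "T \<in> comb_tilings p q m v n"
  shows "FF p T \<in> PiE {..<p} (\<lambda>_. T1 q m v 0 n)"
proof (rule PiE_I)
  have TA: "\<forall>t\<in>T. fst (snd t) < q \<and> snd (snd t) < v (fst (snd t)) \<and> fst t div p + m (fst (snd t)) \<le> n"
    using T unfolding comb_alt[OF p mpos] by blast
  have TB: "\<forall>x<n*p. \<exists>!t\<in>T. ccov p m x t"
    using T unfolding comb_alt[OF p mpos] by blast
  fix r assume "r \<in> {..<p}"
  then have r: "r < p" by simp
  define g where "g = (\<lambda>t::nat\<times>nat\<times>nat. (fst t div p, snd t))"
  define S where "S = {t\<in>T. fst t mod p = r}"
  have FFr: "FF p T r = g ` S" unfolding FF_def g_def S_def using r by simp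
  have A: "\<forall>u\<in>g ` S. fst (snd u) < q \<and> snd (snd u) < v (fst (snd u)) \<and> 0 \<le> fst u \<and> fst u + m (fst (snd u)) \<le> n"
    using TA unfolding g_def S_def by auto
  have B: "\<exists>!u\<in>g ` S. cov1 m y u" if "0 \<le> y" "y < n" for y
  proof (rule ex1_image)
    define x where "x = y * p + r"
    have xlt: "x < n * p"
    proof -
      have "x < (y + 1) * p" unfolding x_def using r by simp
      also have "\<dots> \<le> n * p" using that mult_le_mono1[of "y+1" n p] by simp
      finally show ?thesis .
    qed
    have xd: "x div p = y" "x mod p = r" unfolding x_def using r by auto
    have eq: "cov1 m y (g t) \<longleftrightarrow> ccov p m x t" if "t \<in> S" for t
      using that xd unfolding S_def ccov_def g_def by auto
    have "\<exists>!t\<in>T. ccov p m x t" using TB xlt by simp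
    then obtain t0 where t0: "t0 \<in> T" "ccov p m x t0" and u: "\<And>t. t \<in> T \<Longrightarrow> ccov p m x t \<Longrightarrow> t = t0"
      by (metis ex1_get)
    have "t0 \<in> S" using t0 xd unfolding S_def ccov_def by auto
    show "\<exists>!t\<in>S. cov1 m y (g t)"
    proof (rule ex1I[of _ t0])
      show "t0 \<in> S \<and> cov1 m y (g t0)" using \<open>t0 \<in> S\<close> eq t0 by blast
      fix t assume "t \<in> S \<and> cov1 m y (g t)"
      then show "t = t0" using eq u unfolding S_def by blast
    qed
  qed
  show "FF p T r \<in> T1 q m v 0 n"
    unfolding FFr using A B by (rule T1_I)
next
  fix r assume "r \<notin> {..<p}"
  then show "FF p T r = undefined" unfolding FF_def by simp
qed

lemma G_mem:
  assumes p: "p > 0" and mpos: "\<forall>i<q. m i > 0" and f: "f \<in> PiE {..<p} (\<lambda>_. T1 q m v 0 n)"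
  shows "GG p f \<in> comb_tilings p q m v n"
proof -
  have fA: "\<forall>u\<in>f r. fst (snd u) < q \<and> snd (snd u) < v (fst (snd u)) \<and> fst u + m (fst (snd u)) \<le> n" if "r < p" for r
    using f that unfolding PiE_def Pi_def T1_def by auto
  have fB: "\<forall>y. y < n \<longrightarrow> (\<exists>!u\<in>f r. cov1 m y u)" if "r < p" for r
    using f that unfolding PiE_def Pi_def T1_def by auto
  have memG: "t \<in> GG p f \<longleftrightarrow> fst t mod p < p \<and> (fst t div p, snd t) \<in> f (fst t mod p)" for t
  proof
    assume "t \<in> GG p f"
    then obtain r u where "r < p" "u \<in> f r" "t = (fst u * p + r, snd u)" unfolding GG_def by blast
    then show "fst t mod p < p \<and> (fst t div p, snd t) \<in> f (fst t mod p)" by simp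
  next
    assume h: "fst t mod p < p \<and> (fst t div p, snd t) \<in> f (fst t mod p)"
    have "t = (\<lambda>u. (fst u * p + fst t mod p, snd u)) (fst t div p, snd t)" by simp
    then have "t \<in> (\<lambda>u. (fst u * p + fst t mod p, snd u)) ` f (fst t mod p)" using h by blast
    then show "t \<in> GG p f" unfolding GG_def using h by blast
  qed
  have A: "\<forall>t\<in>GG p f. fst (snd t) < q \<and> snd (snd t) < v (fst (snd t)) \<and> fst t div p + m (fst (snd t)) \<le> n"
  proof
    fix t assume "t \<in> GG p f"
    then have "fst t mod p < p" "(fst t div p, snd t) \<in> f (fst t mod p)" using memG by auto
    then show "fst (snd t) < q \<and> snd (snd t) < v (fst (snd t)) \<and> fst t div p + m (fst (snd t)) \<le> n"
      using fA by fastforce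
  qed
  have B: "\<exists>!t\<in>GG p f. ccov p m x t" if "x < n * p" for x
  proof -
    define r where "r = x mod p"
    define y where "y = x div p"
    have r: "r < p" unfolding r_def using p by simp
    have y: "y < n" unfolding y_def using that by (simp add: div_less_iff_less_mult p)
    obtain u0 where u0: "u0 \<in> f r" "cov1 m y u0" and uu: "\<And>u. u \<in> f r \<Longrightarrow> cov1 m y u \<Longrightarrow> u = u0"
      using fB[OF r] y by (metis ex1_get)
    define t0 where "t0 = (fst u0 * p + r, snd u0)"
    have t0d: "fst t0 div p = fst u0" "fst t0 mod p = r" "snd t0 = snd u0" unfolding t0_def using r by auto
    show ?thesis
    proof (rule ex1I[of _ t0])
      show "t0 \<in> GG p f \<and> ccov p m x t0"
        using memG[of t0] t0d u0 r unfolding ccov_def r_def y_def by simp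
      fix t assume "t \<in> GG p f \<and> ccov p m x t"
      then have h: "fst t mod p < p" "(fst t div p, snd t) \<in> f (fst t mod p)" "ccov p m x t" using memG by auto
      then have "fst t mod p = r" unfolding ccov_def r_def by simp
      then have "(fst t div p, snd t) \<in> f r" "cov1 m y (fst t div p, snd t)" using h unfolding ccov_def y_def by auto
      then have "(fst t div p, snd t) = u0" using uu by blast
      then have "fst t div p = fst u0" "snd t = snd u0" by auto
      then show "t = t0" using \<open>fst t mod p = r\<close> t0d
        by (metis div_mult_mod_eq prod.expand)
    qed
  qed
  show ?thesis unfolding comb_alt[OF p mpos] mem_Collect_eq using A B by blast
qed

lemma card_comb:
  assumes p: "p > 0" and mpos: "\<forall>i<q. m i > 0"
  shows "card (comb_tilings p q m v n) = card (T1 q m v 0 n) ^ p"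
proof -
  have "bij_betw (FF p) (comb_tilings p q m v n) (PiE {..<p} (\<lambda>_. T1 q m v 0 n))"
  proof (rule bij_betw_byWitness[where f' = "GG p"])
    show "\<forall>a\<in>comb_tilings p q m v n. GG p (FF p a) = a" using GF[OF p] by blast
    show "\<forall>a'\<in>PiE {..<p} (\<lambda>_. T1 q m v 0 n). FF p (GG p a') = a'" using FG[OF p] by blast
    show "FF p ` comb_tilings p q m v n \<subseteq> PiE {..<p} (\<lambda>_. T1 q m v 0 n)" using F_mem[OF p mpos] by blast
    show "GG p ` PiE {..<p} (\<lambda>_. T1 q m v 0 n) \<subseteq> comb_tilings p q m v n" using G_mem[OF p mpos] by blast
  qed
  then have "card (comb_tilings p q m v n) = card (PiE {..<p} (\<lambda>_. T1 q m v 0 n))"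
    by (rule bij_betw_same_card)
  also have "\<dots> = card (T1 q m v 0 n) ^ p" by (simp add: card_PiE)
  finally show ?thesis .
qed

theorem corollary1:
  fixes p q :: nat and m v :: "nat \<Rightarrow> nat" and s :: "int \<Rightarrow> nat"
  assumes "p > 0" and "q > 0"
    and "\<forall>i j. i < j \<and> j < q \<longrightarrow> m i < m j"
    and "\<forall>i < q. m i > 0" and "\<forall>i < q. v i > 0"
    and "\<forall>n < 0. s n = 0"
    and "\<forall>n \<ge> 0. s n = (\<Sum>i<q. v i * s (n - int (m i))) + (if n = 0 then 1 else 0)"
  shows "\<forall>n :: nat. card (comb_tilings p q m v n) = s (int n) ^ p"
proof
  fix n :: nat
  have "card (T1 q m v 0 n) = s (int n - int 0)"
    by (rule T1_card[OF assms(4) assms(6) assms(7)]) simp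
  then show "card (comb_tilings p q m v n) = s (int n) ^ p"
    using card_comb[OF assms(1) assms(4)] by simp
qed

end
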